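(* Let $(\mathfrak g,[\cdot,\cdot],\delta,n)$ be an NL bialgebra and $k\ge1$. Then $\delta_{({}^tn)^k}(\xi)=\iota_{({}^tn)^k}\delta(\xi)-\delta(n^k\xi)$ defines a 1-cocycle for $[\cdot,\cdot]$ if and only if $\delta$ is a 1-cocycle for the deformed bracket $[\cdot,\cdot]_{n^k}$.
   Context: $(\mathfrak g,[\cdot,\cdot])$ is a finite-dimensional real Lie algebra; $\langle\mathrm{ad}^*_\xi\eta,\zeta\rangle=-\langle\eta,[\xi,\zeta]\rangle$. Elements of $\wedge^2\mathfrak g$ are skew-symmetric bilinear forms on $\mathfrak g^*$; for linear $\phi:\mathfrak g^*\to\mathfrak g^*$, $(\iota_\phi P)(\eta_1,\eta_2)=P(\phi\eta_1,\eta_2)+P(\eta_1,\phi\eta_2)$; $\mathrm{ad}^{(2)}_\xi=\iota_{\mathrm{ad}^*_\xi}$. A linear $\delta:\mathfrak g\to\wedge^2\mathfrak g$ is a 1-cocycle for $[\cdot,\cdot]$ if $\mathrm{ad}^{(2)}_{\xi_1}\delta(\xi_2)-\mathrm{ad}^{(2)}_{\xi_2}\delta(\xi_1)-\delta([\xi_1,\xi_2])=0$; a Lie bialgebra $(\mathfrak g,[\cdot,\cdot],\delta)$ has such $\delta$ with dual bracket $\langle[\eta_1,\eta_2]_{\mathfrak g^*},\xi\rangle=\delta(\xi)(\eta_1,\eta_2)$ a Lie bracket. For linear $m:\mathfrak g\to\mathfrak g$, $[\xi_1,\xi_2]_m=[m\xi_1,\xi_2]+[\xi_1,m\xi_2]-m[\xi_1,\xi_2]$;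 $m$ is Nijenhuis if $m[\xi_1,\xi_2]_m=[m\xi_1,m\xi_2]$. ${}^tn$ is the transpose of $n$, $\underline{\mathrm{ad}}^*_{\,\xi}=[{}^tn,\mathrm{ad}^*_\xi]$. A 1-cocycle for $[\cdot,\cdot]_{n^k}$ is a linear $\delta'$ with $\iota_{A^k_{\xi_1}}\delta'(\xi_2)-\iota_{A^k_{\xi_2}}\delta'(\xi_1)-\delta'([\xi_1,\xi_2]_{n^k})=0$, where $A^k_\xi=[({}^tn)^k,\mathrm{ad}^*_\xi]+\mathrm{ad}^*_{n^k\xi}$. An NL bialgebra $(\mathfrak g,[\cdot,\cdot],\delta,n)$ is a Lie bialgebra with a Nijenhuis operator $n$ on $\mathfrak g$ such that (1) $\delta$ is a 1-cocycle for $[\cdot,\cdot]_n$; (2) ${}^tn$ is Nijenhuis on $(\mathfrak g^*,[\cdot,\cdot]_{\mathfrak g^*})$, i.e. ${}^tn([{}^tn\eta_1,\eta_2]_{\mathfrak g^*}+[\eta_1,{}^tn\eta_2]_{\mathfrak g^*}-{}^tn[\eta_1,\eta_2]_{\mathfrak g^*})=[{}^tn\eta_1,{}^tn\eta_2]_{\mathfrak g^*}$; (3) $C(\delta,n)=0$, meaning $\iota_{{}^tn\circ\underline{\mathrm{ad}}^*_{\xi_1}}\delta(\xi_2)-\iota_{{}^tn\circ\underline{\mathrm{ad}}^*_{\xi_2}}\delta(\xi_1)=\iota_{\underline{\mathrm{ad}}^*_{\xi_1}}\delta(n\xi_2)-\iota_{\underline{\mathrm{ad}}^*_{\xi_2}}\delta(n\xi_1)$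 for all $\xi_1,\xi_2$. *)

theory Defs
  imports "HOL-Analysis.Analysis"
begin

text \<open>The finite-dimensional real Lie algebra g is a type 'g of class
  euclidean_space. Its dual space g* is represented by the same type 'g, with the
  canonical pairing  <eta, xi> = eta \<bullet> xi  (inner product); this is a linear
  isomorphism g* = g, so nothing is lost. Transposes of linear maps are then
  adjoints w.r.t. the pairing.  Elements of wedge^2 g are skew-symmetric bilinear
  forms on g*, i.e. functions 'g => 'g => real.\<close>

definition lie_algebra :: "('g::euclidean_space \<Rightarrow> 'g \<Rightarrow> 'g) \<Rightarrow> bool" where
  "lie_algebra br \<longleftrightarrow> bilinear br \<and> (\<forall>x y. br x y = - br y x)
     \<and> (\<forall>x y z. br x (br y z) + br y (br z x) + br z (br x y) = 0)"

definition transp :: "('g::euclidean_space \<Rightarrow> 'g) \<Rightarrow> 'g \<Rightarrow> 'g" where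
  "transp n = adjoint n"

definition coad :: "('g::euclidean_space \<Rightarrow> 'g \<Rightarrow> 'g) \<Rightarrow> 'g \<Rightarrow> 'g \<Rightarrow> 'g" where
  "coad br xi = adjoint (\<lambda>zeta. - br xi zeta)"

definition wedge2 :: "('g::euclidean_space \<Rightarrow> 'g \<Rightarrow> real) \<Rightarrow> bool" where
  "wedge2 P \<longleftrightarrow> bilinear P \<and> (\<forall>a b. P a b = - P b a)"

definition iota :: "('g \<Rightarrow> 'g) \<Rightarrow> ('g \<Rightarrow> 'g \<Rightarrow> real) \<Rightarrow> 'g \<Rightarrow> 'g \<Rightarrow> real" where
  "iota phi P eta1 eta2 = P (phi eta1) eta2 + P eta1 (phi eta2)"

definition comm :: "('g::real_vector \<Rightarrow> 'g) \<Rightarrow> ('g \<Rightarrow> 'g) \<Rightarrow> 'g \<Rightarrow> 'g" where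
  "comm f g = (\<lambda>x. f (g x) - g (f x))"

definition linear_delta :: "('g::euclidean_space \<Rightarrow> 'g \<Rightarrow> 'g \<Rightarrow> real) \<Rightarrow> bool" where
  "linear_delta delta \<longleftrightarrow> (\<forall>a b x y eta1 eta2.
      delta (a *\<^sub>R x + b *\<^sub>R y) eta1 eta2 = a * delta x eta1 eta2 + b * delta y eta1 eta2)"

definition cocycle_wrt :: "('g \<Rightarrow> 'g \<Rightarrow> 'g) \<Rightarrow> ('g \<Rightarrow> 'g \<Rightarrow> 'g) \<Rightarrow> ('g \<Rightarrow> 'g \<Rightarrow> 'g \<Rightarrow> real) \<Rightarrow> bool" where
  "cocycle_wrt A b delta \<longleftrightarrow> (\<forall>x1 x2 eta1 eta2.
      iota (A x1) (delta x2) eta1 eta2 - iota (A x2) (delta x1) eta1 eta2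
        - delta (b x1 x2) eta1 eta2 = 0)"

text \<open>1-cocycle for [.,.]: uses ad^(2)_xi = iota_{ad*_xi}\<close>
definition cocycle :: "('g::euclidean_space \<Rightarrow> 'g \<Rightarrow> 'g) \<Rightarrow> ('g \<Rightarrow> 'g \<Rightarrow> 'g \<Rightarrow> real) \<Rightarrow> bool" where
  "cocycle br delta \<longleftrightarrow> linear_delta delta \<and> cocycle_wrt (coad br) br delta"

definition deformed :: "('g::real_vector \<Rightarrow> 'g \<Rightarrow> 'g) \<Rightarrow> ('g \<Rightarrow> 'g) \<Rightarrow> 'g \<Rightarrow> 'g \<Rightarrow> 'g" where
  "deformed br m x1 x2 = br (m x1) x2 + br x1 (m x2) - m (br x1 x2)"

definition nijenhuis :: "('g::real_vector \<Rightarrow> 'g \<Rightarrow> 'g) \<Rightarrow> ('g \<Rightarrow> 'g) \<Rightarrow> bool" where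
  "nijenhuis br m \<longleftrightarrow> linear m \<and> (\<forall>x1 x2. m (deformed br m x1 x2) = br (m x1) (m x2))"

definition Aop :: "('g::euclidean_space \<Rightarrow> 'g \<Rightarrow> 'g) \<Rightarrow> ('g \<Rightarrow> 'g) \<Rightarrow> nat \<Rightarrow> 'g \<Rightarrow> 'g \<Rightarrow> 'g" where
  "Aop br n k xi = (\<lambda>eta. comm (transp n ^^ k) (coad br xi) eta + coad br ((n ^^ k) xi) eta)"

definition cocycle_deformed :: "('g::euclidean_space \<Rightarrow> 'g \<Rightarrow> 'g) \<Rightarrow> ('g \<Rightarrow> 'g) \<Rightarrow> nat
     \<Rightarrow> ('g \<Rightarrow> 'g \<Rightarrow> 'g \<Rightarrow> real) \<Rightarrow> bool" where
  "cocycle_deformed br n k delta \<longleftrightarrow> linear_delta delta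
      \<and> cocycle_wrt (Aop br n k) (deformed br (n ^^ k)) delta"

text \<open>dual bracket on g*:  <[eta1,eta2]_*, xi> = delta(xi)(eta1,eta2)\<close>
definition dual_br :: "('g::euclidean_space \<Rightarrow> 'g \<Rightarrow> 'g \<Rightarrow> real) \<Rightarrow> 'g \<Rightarrow> 'g \<Rightarrow> 'g" where
  "dual_br delta eta1 eta2 = (\<Sum>b\<in>Basis. delta b eta1 eta2 *\<^sub>R b)"

definition lie_bialgebra :: "('g::euclidean_space \<Rightarrow> 'g \<Rightarrow> 'g) \<Rightarrow> ('g \<Rightarrow> 'g \<Rightarrow> 'g \<Rightarrow> real) \<Rightarrow> bool" where
  "lie_bialgebra br delta \<longleftrightarrow> lie_algebra br \<and> (\<forall>x. wedge2 (delta x)) \<and> cocycle br delta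
      \<and> lie_algebra (dual_br delta)"

definition uad :: "('g::euclidean_space \<Rightarrow> 'g \<Rightarrow> 'g) \<Rightarrow> ('g \<Rightarrow> 'g) \<Rightarrow> 'g \<Rightarrow> 'g \<Rightarrow> 'g" where
  "uad br n xi = comm (transp n) (coad br xi)"

definition C_zero :: "('g::euclidean_space \<Rightarrow> 'g \<Rightarrow> 'g) \<Rightarrow> ('g \<Rightarrow> 'g \<Rightarrow> 'g \<Rightarrow> real) \<Rightarrow> ('g \<Rightarrow> 'g) \<Rightarrow> bool" where
  "C_zero br delta n \<longleftrightarrow> (\<forall>x1 x2 eta1 eta2.
      iota (transp n \<circ> uad br n x1) (delta x2) eta1 eta2 - iota (transp n \<circ> uad br n x2) (delta x1) eta1 eta2
      = iota (uad br n x1) (delta (n x2)) eta1 eta2 - iota (uad br n x2) (delta (n x1)) eta1 eta2)"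

definition NL_bialgebra :: "('g::euclidean_space \<Rightarrow> 'g \<Rightarrow> 'g) \<Rightarrow> ('g \<Rightarrow> 'g \<Rightarrow> 'g \<Rightarrow> real) \<Rightarrow> ('g \<Rightarrow> 'g) \<Rightarrow> bool" where
  "NL_bialgebra br delta n \<longleftrightarrow> lie_bialgebra br delta \<and> nijenhuis br n
      \<and> cocycle_deformed br n 1 delta
      \<and> nijenhuis (dual_br delta) (transp n)
      \<and> C_zero br delta n"

definition delta_tnk :: "('g::euclidean_space \<Rightarrow> 'g \<Rightarrow> 'g \<Rightarrow> real) \<Rightarrow> ('g \<Rightarrow> 'g) \<Rightarrow> nat \<Rightarrow> 'g \<Rightarrow> 'g \<Rightarrow> 'g \<Rightarrow> real" where
  "delta_tnk delta n k xi eta1 eta2 = iota (transp n ^^ k) (delta xi) eta1 eta2 - delta ((n ^^ k) xi) eta1 eta2"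

end

theory Submission
  imports Defs
begin

lemma key_eq:
  fixes br :: "'g::euclidean_space \<Rightarrow> 'g \<Rightarrow> 'g"
    and delta :: "'g \<Rightarrow> 'g \<Rightarrow> 'g \<Rightarrow> real"
  assumes bil: "\<And>x. bilinear (delta x)"
    and ld: "linear_delta delta"
    and coc: "cocycle_wrt (coad br) br delta"
  shows "iota (coad br x1) (\<lambda>a b. iota N (delta x2) a b - delta (m x2) a b) e1 e2
       - iota (coad br x2) (\<lambda>a b. iota N (delta x1) a b - delta (m x1) a b) e1 e2
       - (iota N (delta (br x1 x2)) e1 e2 - delta (m (br x1 x2)) e1 e2)
     = iota (\<lambda>eta. comm N (coad br x1) eta + coad br (m x1) eta) (delta x2) e1 e2
       - iota (\<lambda>eta. comm N (coad br x2) eta + coad br (m x2) eta) (delta x1) e1 e2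
       - delta (deformed br m x1 x2) e1 e2"
proof -
  have C: "\<And>x y a b. iota (coad br x) (delta y) a b - iota (coad br y) (delta x) a b
        - delta (br x y) a b = 0"
    using coc unfolding cocycle_wrt_def by blast
  have dadd: "\<And>x y a b. delta (x + y) a b = delta x a b + delta y a b"
    using ld unfolding linear_delta_def by (metis scaleR_one mult_1)
  have dsub: "\<And>x y a b. delta (x - y) a b = delta x a b - delta y a b"
  proof -
    fix x y a b
    have "delta (1 *\<^sub>R x + (-1) *\<^sub>R y) a b = 1 * delta x a b + (-1) * delta y a b"
      using ld unfolding linear_delta_def by blast
    then show "delta (x - y) a b = delta x a b - delta y a b" by simp
  qed
  have la: "\<And>x u v w. delta x (u + v) w = delta x u w + delta x v w"
    using bil bilinear_ladd by blast
  have ls: "\<And>x u v w. delta x (u - v) w = delta x u w - delta x v w"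
    using bil bilinear_lsub by blast
  have ra: "\<And>x u v w. delta x w (u + v) = delta x w u + delta x w v"
    using bil bilinear_radd by blast
  have rs: "\<And>x u v w. delta x w (u - v) = delta x w u - delta x w v"
    using bil bilinear_rsub by blast
  note c1 = C[of x1 x2 "N e1" e2] C[of x1 x2 e1 "N e2"] C[of "m x1" x2 e1 e2] C[of x1 "m x2" e1 e2]
  show ?thesis
    using c1 unfolding iota_def comm_def deformed_def
    by (simp add: dadd dsub la ls ra rs algebra_simps)
qed

theorem mainTheorem12:
  fixes br :: "'g::euclidean_space \<Rightarrow> 'g \<Rightarrow> 'g"
    and delta :: "'g \<Rightarrow> 'g \<Rightarrow> 'g \<Rightarrow> real"
    and n :: "'g \<Rightarrow> 'g"
    and k :: nat
  assumes "NL_bialgebra br delta n"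
    and "k \<ge> 1"
  shows "cocycle br (delta_tnk delta n k) \<longleftrightarrow> cocycle_deformed br n k delta"
proof -
  have lb: "lie_bialgebra br delta" and nj: "nijenhuis br n"
    using assms(1) unfolding NL_bialgebra_def by auto
  have bil: "\<And>x. bilinear (delta x)" using lb unfolding lie_bialgebra_def wedge2_def by blast
  have cocd: "cocycle br delta" using lb unfolding lie_bialgebra_def by blast
  hence ld: "linear_delta delta" and coc: "cocycle_wrt (coad br) br delta"
    unfolding cocycle_def by auto
  have lin: "linear (n ^^ k)"
  proof (induction k)
    case 0 then show ?case by (simp add: linear_id[unfolded id_def])
  next
    case (Suc k)
    have "linear n" using nj unfolding nijenhuis_def by blast
    then show ?case using Suc by (simp add: linear_compose[unfolded o_def])
  qed
  have ldt: "linear_delta (delta_tnk delta n k)"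
    unfolding linear_delta_def delta_tnk_def iota_def
  proof (intro allI)
    fix a b x y eta1 eta2
    have l: "\<And>u v. delta (a *\<^sub>R x + b *\<^sub>R y) u v = a * delta x u v + b * delta y u v"
      using ld unfolding linear_delta_def by blast
    have "(n ^^ k) (a *\<^sub>R x + b *\<^sub>R y) = a *\<^sub>R (n ^^ k) x + b *\<^sub>R (n ^^ k) y"
      using lin by (simp add: linear_add linear_scale)
    then show "delta (a *\<^sub>R x + b *\<^sub>R y) ((transp n ^^ k) eta1) eta2 +
           delta (a *\<^sub>R x + b *\<^sub>R y) eta1 ((transp n ^^ k) eta2) -
           delta ((n ^^ k) (a *\<^sub>R x + b *\<^sub>R y)) eta1 eta2 =
           a * (delta x ((transp n ^^ k) eta1) eta2 + delta x eta1 ((transp n ^^ k) eta2) -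
                delta ((n ^^ k) x) eta1 eta2) +
           b * (delta y ((transp n ^^ k) eta1) eta2 + delta y eta1 ((transp n ^^ k) eta2) -
                delta ((n ^^ k) y) eta1 eta2)"
      using l ld unfolding linear_delta_def by (simp add: algebra_simps)
  qed
  have dt: "delta_tnk delta n k = (\<lambda>x a b. iota (transp n ^^ k) (delta x) a b - delta ((n ^^ k) x) a b)"
    by (simp add: delta_tnk_def fun_eq_iff)
  have "cocycle_wrt (coad br) br (delta_tnk delta n k) \<longleftrightarrow>
        cocycle_wrt (Aop br n k) (deformed br (n ^^ k)) delta"
    unfolding cocycle_wrt_def dt Aop_def
    using key_eq[OF bil ld coc, of _ "transp n ^^ k" _ "n ^^ k"] by simp
  then show ?thesis unfolding cocycle_def cocycle_deformed_def using ld ldt by blast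
qed

end
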